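(* Let $\Omega$ be an open subset of $\mathbb H^n=\{(x',x^n):x^n\ge0\}$ meeting $\{x^n=0\}$, and set $\Gamma=\Omega\cap\{x^n=0\}$. Let $H_1,H_2$ be smooth positive definite symmetric matrix fields (Riemannian metrics) on $\Omega$ of the form $$H_i(x',x^n)=(dx^n)^2+h_i(x',x^n),\quad i=1,2,$$ with $H_1=H_2+\mathcal O((x^n)^\infty)$ on $\Gamma$. Let $f_1,f_2$ be functions on $\Omega$ with $L_{H_i}f_i=0$ in $\{x^n>0\}\cap\Omega$, $i=1,2$, having the same $C^\infty$ smooth Cauchy data on $\Gamma$: $f_1=f_2$ and $\partial_{x^n}f_1=\partial_{x^n}f_2$ on $\Gamma$. Then $f_1=f_2+\mathcal O((x^n)^\infty)$ on $\Gamma$.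
   Context: $L_H=-\Delta_H+\frac{n-2}{4(n-1)}S_H$ is the conformal Laplacian of the metric $H$ ($\Delta_H$ the Laplace–Beltrami operator, $S_H$ the scalar curvature). For functions or tensors $A,B$, "$A=B+\mathcal O((x^n)^\infty)$ on $\Gamma$" means that $\partial^j_{x^n}(A-B)$ (componentwise) vanishes on $\Gamma$ for all $j\ge0$. *)

theory Defs
  imports "HOL-Analysis.Analysis"
begin

text \<open>Coordinates: points of R^n are vectors x :: real^'n; the distinguished
  normal coordinate x^n is the component x $ nn for a fixed index nn.\<close>

definition half_space :: "'n \<Rightarrow> (real^'n) set" where
  "half_space nn = {x. x $ nn \<ge> 0}"

text \<open>Partial derivative in direction i, taken within the domain Omega
  (one-sided at boundary points of the half space).\<close>
definition pd :: "(real^'n) set \<Rightarrow> 'n \<Rightarrow> (real^'n \<Rightarrow> real) \<Rightarrow> real^'n \<Rightarrow> real" where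
  "pd \<Omega> i f x = (SOME D. ((\<lambda>t. f (x + t *\<^sub>R axis i 1)) has_real_derivative D)
                       (at 0 within {t. x + t *\<^sub>R axis i 1 \<in> \<Omega>}))"

definition has_pd :: "(real^'n) set \<Rightarrow> 'n \<Rightarrow> (real^'n \<Rightarrow> real) \<Rightarrow> real^'n \<Rightarrow> bool" where
  "has_pd \<Omega> i f x \<longleftrightarrow> (\<exists>D. ((\<lambda>t. f (x + t *\<^sub>R axis i 1)) has_real_derivative D)
                       (at 0 within {t. x + t *\<^sub>R axis i 1 \<in> \<Omega>}))"

fun pds :: "(real^'n) set \<Rightarrow> 'n list \<Rightarrow> (real^'n \<Rightarrow> real) \<Rightarrow> real^'n \<Rightarrow> real" where
  "pds \<Omega> [] f = f"
| "pds \<Omega> (i # is) f = pd \<Omega> i (pds \<Omega> is f)"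

definition smooth_on :: "(real^'n) set \<Rightarrow> (real^'n \<Rightarrow> real) \<Rightarrow> bool" where
  "smooth_on \<Omega> f \<longleftrightarrow> (\<forall>is. continuous_on \<Omega> (pds \<Omega> is f) \<and>
                          (\<forall>i. \<forall>x\<in>\<Omega>. has_pd \<Omega> i (pds \<Omega> is f) x))"

definition riem_metric :: "(real^'n) set \<Rightarrow> (real^'n \<Rightarrow> real^'n^'n) \<Rightarrow> bool" where
  "riem_metric \<Omega> H \<longleftrightarrow>
     (\<forall>a b. smooth_on \<Omega> (\<lambda>y. H y $ a $ b)) \<and>
     (\<forall>x\<in>\<Omega>. \<forall>a b. H x $ a $ b = H x $ b $ a) \<and>
     (\<forall>x\<in>\<Omega>. \<forall>v. v \<noteq> 0 \<longrightarrow> v \<bullet> (H x *v v) > 0)"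

text \<open>H = (dx^n)^2 + h(x',x^n): no cross terms with dx^n, and H_nn = 1.\<close>
definition normal_form_metric :: "'n \<Rightarrow> (real^'n) set \<Rightarrow> (real^'n \<Rightarrow> real^'n^'n) \<Rightarrow> bool" where
  "normal_form_metric nn \<Omega> H \<longleftrightarrow>
     (\<forall>x\<in>\<Omega>. H x $ nn $ nn = 1 \<and>
        (\<forall>k. k \<noteq> nn \<longrightarrow> H x $ nn $ k = 0 \<and> H x $ k $ nn = 0))"

definition laplace_beltrami ::
  "(real^'n) set \<Rightarrow> (real^'n \<Rightarrow> real^'n^'n) \<Rightarrow> (real^'n \<Rightarrow> real) \<Rightarrow> real^'n \<Rightarrow> real" where
  "laplace_beltrami \<Omega> H f x =
     (1 / sqrt (det (H x))) *
     (\<Sum>i\<in>UNIV. pd \<Omega> i (\<lambda>y. sqrt (det (H y)) *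
          (\<Sum>j\<in>UNIV. matrix_inv (H y) $ i $ j * pd \<Omega> j f y)) x)"

definition christoffel ::
  "(real^'n) set \<Rightarrow> (real^'n \<Rightarrow> real^'n^'n) \<Rightarrow> 'n \<Rightarrow> 'n \<Rightarrow> 'n \<Rightarrow> real^'n \<Rightarrow> real" where
  "christoffel \<Omega> H k i j x =
     1/2 * (\<Sum>l\<in>UNIV. matrix_inv (H x) $ k $ l *
        (pd \<Omega> i (\<lambda>y. H y $ j $ l) x + pd \<Omega> j (\<lambda>y. H y $ i $ l) x
         - pd \<Omega> l (\<lambda>y. H y $ i $ j) x))"

definition ricci ::
  "(real^'n) set \<Rightarrow> (real^'n \<Rightarrow> real^'n^'n) \<Rightarrow> 'n \<Rightarrow> 'n \<Rightarrow> real^'n \<Rightarrow> real" where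
  "ricci \<Omega> H i j x =
     (\<Sum>k\<in>UNIV. pd \<Omega> k (christoffel \<Omega> H k i j) x - pd \<Omega> j (christoffel \<Omega> H k i k) x
        + (\<Sum>l\<in>UNIV. christoffel \<Omega> H k k l x * christoffel \<Omega> H l i j x
                    - christoffel \<Omega> H k j l x * christoffel \<Omega> H l i k x))"

definition scalar_curvature ::
  "(real^'n) set \<Rightarrow> (real^'n \<Rightarrow> real^'n^'n) \<Rightarrow> real^'n \<Rightarrow> real" where
  "scalar_curvature \<Omega> H x =
     (\<Sum>i\<in>UNIV. \<Sum>j\<in>UNIV. matrix_inv (H x) $ i $ j * ricci \<Omega> H i j x)"

definition conformal_laplacian ::
  "(real^'n) set \<Rightarrow> (real^'n \<Rightarrow> real^'n^'n) \<Rightarrow> (real^'n \<Rightarrow> real) \<Rightarrow> real^'n \<Rightarrow> real" where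
  "conformal_laplacian \<Omega> H f x =
     - laplace_beltrami \<Omega> H f x
     + (real CARD('n) - 2) / (4 * (real CARD('n) - 1)) * scalar_curvature \<Omega> H x * f x"

end

theory Submission
  imports Defs
begin
locale hs =
  fixes nn :: "'n::finite" and \<Omega> :: "(real^'n) set"
  assumes op: "openin (top_of_set (half_space nn)) \<Omega>"
begin

lemma sub_hs: "\<Omega> \<subseteq> half_space nn"
  using op openin_imp_subset by blast

lemma nbhd: "x \<in> \<Omega> \<Longrightarrow> \<exists>e>0. \<forall>y. y $ nn \<ge> 0 \<longrightarrow> dist y x < e \<longrightarrow> y \<in> \<Omega>"
  using op unfolding openin_euclidean_subtopology_iff half_space_def by auto

lemma has_pd_deriv:
  assumes "has_pd \<Omega> i f x"
  shows "((\<lambda>t. f (x + t *\<^sub>R axis i 1)) has_real_derivative pd \<Omega> i f x)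
           (at 0 within {t. x + t *\<^sub>R axis i 1 \<in> \<Omega>})"
  using assms unfolding has_pd_def pd_def by (rule someI_ex)

lemma nontriv:
  assumes "x \<in> \<Omega>"
  shows "at 0 within {t. x + t *\<^sub>R axis i 1 \<in> \<Omega>} \<noteq> bot"
proof -
  obtain e where e: "e > 0" "\<forall>y. y $ nn \<ge> 0 \<longrightarrow> dist y x < e \<longrightarrow> y \<in> \<Omega>"
    using nbhd assms by blast
  have x0: "x $ nn \<ge> 0" using assms sub_hs half_space_def by auto
  have "{0<..<e} \<subseteq> {t. x + t *\<^sub>R axis i 1 \<in> \<Omega>}"
  proof
    fix t :: real assume t: "t \<in> {0<..<e}"
    have "(x + t *\<^sub>R axis i 1) $ nn \<ge> 0" using x0 t by (auto simp: axis_def)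
    moreover have "dist (x + t *\<^sub>R axis i 1) x < e" using t
      by (simp add: dist_norm)
    ultimately show "t \<in> {t. x + t *\<^sub>R axis i 1 \<in> \<Omega>}" using e by auto
  qed
  moreover have "(0::real) islimpt {0<..<e}" using e islimpt_greaterThanLessThan1 by blast
  ultimately have "0 islimpt {t. x + t *\<^sub>R axis i 1 \<in> \<Omega>}" using islimpt_subset by blast
  then show ?thesis using trivial_limit_within by blast
qed

lemma pd_rule:
  assumes "x \<in> \<Omega>"
    and "((\<lambda>t. f (x + t *\<^sub>R axis i 1)) has_real_derivative D)
           (at 0 within {t. x + t *\<^sub>R axis i 1 \<in> \<Omega>})"
  shows "has_pd \<Omega> i f x" "pd \<Omega> i f x = D"
proof -
  show h: "has_pd \<Omega> i f x" using assms(2) unfolding has_pd_def by blast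
  show "pd \<Omega> i f x = D"
    using has_field_derivative_unique[OF has_pd_deriv[OF h] assms(2) nontriv[OF assms(1)]] .
qed

lemma deriv_cong:
  assumes "x \<in> \<Omega>" "\<forall>y\<in>\<Omega>. f y = g y"
    and "((\<lambda>t. f (x + t *\<^sub>R axis i 1)) has_real_derivative D)
           (at 0 within {t. x + t *\<^sub>R axis i 1 \<in> \<Omega>})"
  shows "((\<lambda>t. g (x + t *\<^sub>R axis i 1)) has_real_derivative D)
           (at 0 within {t. x + t *\<^sub>R axis i 1 \<in> \<Omega>})"
  by (rule has_field_derivative_transform_within[OF assms(3), of 1]) (use assms in auto)

lemma pd_cong:
  assumes "x \<in> \<Omega>" "\<forall>y\<in>\<Omega>. f y = g y"
  shows "has_pd \<Omega> i f x = has_pd \<Omega> i g x" "pd \<Omega> i f x = pd \<Omega> i g x"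
proof -
  have e: "\<And>D. ((\<lambda>t. f (x + t *\<^sub>R axis i 1)) has_real_derivative D)
           (at 0 within {t. x + t *\<^sub>R axis i 1 \<in> \<Omega>}) \<longleftrightarrow>
        ((\<lambda>t. g (x + t *\<^sub>R axis i 1)) has_real_derivative D)
           (at 0 within {t. x + t *\<^sub>R axis i 1 \<in> \<Omega>})"
  proof
    fix D assume "((\<lambda>t. f (x + t *\<^sub>R axis i 1)) has_real_derivative D)
           (at 0 within {t. x + t *\<^sub>R axis i 1 \<in> \<Omega>})"
    then show "((\<lambda>t. g (x + t *\<^sub>R axis i 1)) has_real_derivative D)
           (at 0 within {t. x + t *\<^sub>R axis i 1 \<in> \<Omega>})"
      using deriv_cong[OF assms(1)] assms(2) by blast
  next
    fix D assume "((\<lambda>t. g (x + t *\<^sub>R axis i 1)) has_real_derivative D)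
           (at 0 within {t. x + t *\<^sub>R axis i 1 \<in> \<Omega>})"
    then show "((\<lambda>t. f (x + t *\<^sub>R axis i 1)) has_real_derivative D)
           (at 0 within {t. x + t *\<^sub>R axis i 1 \<in> \<Omega>})"
      using deriv_cong[OF assms(1), of g f] assms(2) by auto
  qed
  show "has_pd \<Omega> i f x = has_pd \<Omega> i g x" unfolding has_pd_def using e by simp
  show "pd \<Omega> i f x = pd \<Omega> i g x" unfolding pd_def using e by simp
qed

lemma pds_append: "pds \<Omega> (xs @ ys) f = pds \<Omega> xs (pds \<Omega> ys f)"
  by (induction xs) auto

lemma pds_cong:
  assumes "\<forall>y\<in>\<Omega>. f y = g y"
  shows "\<forall>x\<in>\<Omega>. pds \<Omega> is f x = pds \<Omega> is g x"
  using assms by (induction "is") (auto intro: pd_cong)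

end

context hs begin

lemma pd_const: "x \<in> \<Omega> \<Longrightarrow> has_pd \<Omega> i (\<lambda>_. c) x \<and> pd \<Omega> i (\<lambda>_. c) x = 0"
  using pd_rule[of x "\<lambda>_. c" i 0] by auto

lemma pd_add:
  assumes "x \<in> \<Omega>" "has_pd \<Omega> i f x" "has_pd \<Omega> i g x"
  shows "has_pd \<Omega> i (\<lambda>y. f y + g y) x \<and> pd \<Omega> i (\<lambda>y. f y + g y) x = pd \<Omega> i f x + pd \<Omega> i g x"
  using pd_rule[OF assms(1) DERIV_add[OF has_pd_deriv[OF assms(2)] has_pd_deriv[OF assms(3)]]]
  by simp

lemma pd_mult:
  assumes "x \<in> \<Omega>" "has_pd \<Omega> i f x" "has_pd \<Omega> i g x"
  shows "has_pd \<Omega> i (\<lambda>y. f y * g y) x \<and>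
         pd \<Omega> i (\<lambda>y. f y * g y) x = pd \<Omega> i f x * g x + f x * pd \<Omega> i g x"
  using pd_rule[OF assms(1) DERIV_mult[OF has_pd_deriv[OF assms(2)] has_pd_deriv[OF assms(3)]]]
  by (simp add: mult.commute)

lemma pd_inv:
  assumes "x \<in> \<Omega>" "has_pd \<Omega> i f x" "f x \<noteq> 0"
  shows "has_pd \<Omega> i (\<lambda>y. inverse (f y)) x \<and>
         pd \<Omega> i (\<lambda>y. inverse (f y)) x = - (pd \<Omega> i f x * (inverse (f x) * inverse (f x)))"
proof -
  have "((\<lambda>t. inverse (f (x + t *\<^sub>R axis i 1))) has_real_derivative
          - (pd \<Omega> i f x * inverse (f x ^ Suc (Suc 0))))
           (at 0 within {t. x + t *\<^sub>R axis i 1 \<in> \<Omega>})"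
    using DERIV_inverse_fun[OF has_pd_deriv[OF assms(2)]] assms(3) by simp
  from pd_rule[OF assms(1) this] show ?thesis by (simp add: power2_eq_square)
qed

lemma sqrt_deriv_eq:
  fixes z :: real assumes "z \<noteq> 0"
  shows "DERIV sqrt z :> sqrt z * inverse z / 2"
proof (rule DERIV_real_sqrt_generic[OF assms])
  assume z: "z > 0"
  have e: "z = sqrt z * sqrt z" using z by simp
  have "sqrt z > 0" using z by simp
  then show "sqrt z * inverse z / 2 = inverse (sqrt z) / 2"
    by (subst e) (simp add: field_simps)
next
  assume z: "z < 0"
  have e: "z = - (sqrt (-z) * sqrt (-z))" using z by simp
  have "sqrt (-z) > 0" using z by simp
  moreover have "sqrt z = - sqrt (- z)" by (simp add: real_sqrt_minus)
  ultimately show "sqrt z * inverse z / 2 = - inverse (sqrt z) / 2"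
    by (subst e) (simp add: field_simps)
qed

lemma pd_sqrt:
  assumes "x \<in> \<Omega>" "has_pd \<Omega> i f x" "f x \<noteq> 0"
  shows "has_pd \<Omega> i (\<lambda>y. sqrt (f y)) x \<and>
         pd \<Omega> i (\<lambda>y. sqrt (f y)) x = pd \<Omega> i f x * (sqrt (f x) * inverse (f x) / 2)"
proof -
  have "((\<lambda>t. sqrt (f (x + t *\<^sub>R axis i 1))) has_real_derivative
          (sqrt (f x) * inverse (f x) / 2) * pd \<Omega> i f x)
           (at 0 within {t. x + t *\<^sub>R axis i 1 \<in> \<Omega>})"
  proof -
    have d: "DERIV sqrt ((\<lambda>t. f (x + t *\<^sub>R axis i 1)) 0) :> sqrt (f x) * inverse (f x) / 2"
      using sqrt_deriv_eq[OF assms(3)] by simp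
    show ?thesis using DERIV_chain2[OF d has_pd_deriv[OF assms(2)]] by simp
  qed
  from pd_rule[OF assms(1) this] show ?thesis by (simp add: mult.commute)
qed

fun nsm :: "nat \<Rightarrow> (real^'n \<Rightarrow> real) \<Rightarrow> bool" where
  "nsm 0 f = (continuous_on \<Omega> f \<and> (\<forall>i. \<forall>x\<in>\<Omega>. has_pd \<Omega> i f x))"
| "nsm (Suc n) f = (nsm 0 f \<and> (\<forall>i. nsm n (pd \<Omega> i f)))"

lemma nsm_iff: "nsm n f \<longleftrightarrow> (\<forall>is. length is \<le> n \<longrightarrow>
    continuous_on \<Omega> (pds \<Omega> is f) \<and> (\<forall>i. \<forall>x\<in>\<Omega>. has_pd \<Omega> i (pds \<Omega> is f) x))"
proof (induction n arbitrary: f)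
  case 0 then show ?case by auto
next
  case (Suc n)
  show ?case
  proof
    assume a: "nsm (Suc n) f"
    show "\<forall>is. length is \<le> Suc n \<longrightarrow>
      continuous_on \<Omega> (pds \<Omega> is f) \<and> (\<forall>i. \<forall>x\<in>\<Omega>. has_pd \<Omega> i (pds \<Omega> is f) x)"
    proof (intro allI impI)
      fix "is" :: "'n list" assume l: "length is \<le> Suc n"
      show "continuous_on \<Omega> (pds \<Omega> is f) \<and> (\<forall>i. \<forall>x\<in>\<Omega>. has_pd \<Omega> i (pds \<Omega> is f) x)"
      proof (cases "is" rule: rev_cases)
        case Nil then show ?thesis using a by simp
      next
        case (snoc ys i)
        have "pds \<Omega> is f = pds \<Omega> ys (pd \<Omega> i f)" using snoc by (simp add: pds_append)
        moreover have "nsm n (pd \<Omega> i f)" using a by simp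
        ultimately show ?thesis using Suc.IH l snoc by auto
      qed
    qed
  next
    assume a: "\<forall>is. length is \<le> Suc n \<longrightarrow>
      continuous_on \<Omega> (pds \<Omega> is f) \<and> (\<forall>i. \<forall>x\<in>\<Omega>. has_pd \<Omega> i (pds \<Omega> is f) x)"
    have "nsm 0 f" using a[rule_format, of "[]"] by simp
    moreover have "nsm n (pd \<Omega> i f)" for i
      unfolding Suc.IH
    proof (intro allI impI)
      fix "is" :: "'n list" assume "length is \<le> n"
      then show "continuous_on \<Omega> (pds \<Omega> is (pd \<Omega> i f)) \<and>
         (\<forall>j. \<forall>x\<in>\<Omega>. has_pd \<Omega> j (pds \<Omega> is (pd \<Omega> i f)) x)"
        using a[rule_format, of "is @ [i]"] by (simp add: pds_append)
    qed
    ultimately show "nsm (Suc n) f" by simp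
  qed
qed

lemma smooth_nsm: "smooth_on \<Omega> f \<longleftrightarrow> (\<forall>n. nsm n f)"
  unfolding smooth_on_def nsm_iff by blast

lemma nsm_mono: "nsm (Suc n) f \<Longrightarrow> nsm n f"
  by (induction n arbitrary: f) auto

lemma nsm_cong: "nsm n f \<Longrightarrow> \<forall>y\<in>\<Omega>. f y = g y \<Longrightarrow> nsm n g"
proof (induction n arbitrary: f g)
  case 0 then show ?case using pd_cong(1) continuous_on_cong by (metis nsm.simps(1))
next
  case (Suc n)
  have a: "nsm 0 g" using Suc.prems pd_cong(1) continuous_on_cong by (metis nsm.simps)
  have "nsm n (pd \<Omega> i g)" for i
    using Suc.IH[of "pd \<Omega> i f" "pd \<Omega> i g"] Suc.prems pd_cong(2) by auto
  then show ?case using a by simp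
qed

lemma nsm_const: "nsm n (\<lambda>_. c)"
proof (induction n arbitrary: c)
  case 0 then show ?case using pd_const by auto
next
  case (Suc n)
  have "nsm n (pd \<Omega> i (\<lambda>_. c))" for i
    using nsm_cong[OF Suc.IH[of 0]] pd_const by auto
  then show ?case using pd_const by auto
qed

lemma nsm_add: "nsm n f \<Longrightarrow> nsm n g \<Longrightarrow> nsm n (\<lambda>y. f y + g y)"
proof (induction n arbitrary: f g)
  case 0 then show ?case using pd_add by (auto intro: continuous_on_add)
next
  case (Suc n)
  have "nsm n (pd \<Omega> i (\<lambda>y. f y + g y))" for i
    using nsm_cong[OF Suc.IH[of "pd \<Omega> i f" "pd \<Omega> i g"]] Suc.prems pd_add by auto
  moreover have "nsm 0 (\<lambda>y. f y + g y)" using Suc.prems pd_add by (auto intro: continuous_on_add)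
  ultimately show ?case by simp
qed

lemma nsm_mult: "nsm n f \<Longrightarrow> nsm n g \<Longrightarrow> nsm n (\<lambda>y. f y * g y)"
proof (induction n arbitrary: f g)
  case 0 then show ?case using pd_mult by (auto intro: continuous_on_mult)
next
  case (Suc n)
  have f0: "nsm 0 f" and fi: "\<And>i. nsm n (pd \<Omega> i f)" and fn: "nsm n f"
    using Suc.prems(1) nsm_mono by auto
  have g0: "nsm 0 g" and gi: "\<And>i. nsm n (pd \<Omega> i g)" and gn: "nsm n g"
    using Suc.prems(2) nsm_mono by auto
  have "nsm n (pd \<Omega> i (\<lambda>y. f y * g y))" for i
  proof -
    have "nsm n (\<lambda>y. pd \<Omega> i f y * g y + f y * pd \<Omega> i g y)"
      by (intro nsm_add Suc.IH fi gi fn gn)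
    moreover have "\<forall>y\<in>\<Omega>. pd \<Omega> i f y * g y + f y * pd \<Omega> i g y = pd \<Omega> i (\<lambda>y. f y * g y) y"
      using pd_mult f0 g0 by simp
    ultimately show ?thesis by (rule nsm_cong)
  qed
  moreover have "nsm 0 (\<lambda>y. f y * g y)" using f0 g0 pd_mult by (auto intro: continuous_on_mult)
  ultimately show ?case by simp
qed

lemma nsm_inv: "nsm n f \<Longrightarrow> \<forall>x\<in>\<Omega>. f x \<noteq> 0 \<Longrightarrow> nsm n (\<lambda>y. inverse (f y))"
proof (induction n)
  case 0 then show ?case using pd_inv by (auto intro: continuous_on_inverse)
next
  case (Suc n)
  have f0: "nsm 0 f" and fi: "\<And>i. nsm n (pd \<Omega> i f)" and fn: "nsm n f"
    using Suc.prems(1) nsm_mono by auto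
  have ih: "nsm n (\<lambda>y. inverse (f y))" using Suc.IH fn Suc.prems(2) by blast
  have "nsm n (pd \<Omega> i (\<lambda>y. inverse (f y)))" for i
  proof -
    have "nsm n (\<lambda>y. (\<lambda>_. -1) y * (pd \<Omega> i f y * (inverse (f y) * inverse (f y))))"
      by (intro nsm_mult nsm_const fi ih)
    moreover have "\<forall>y\<in>\<Omega>. (\<lambda>_. -1) y * (pd \<Omega> i f y * (inverse (f y) * inverse (f y)))
          = pd \<Omega> i (\<lambda>y. inverse (f y)) y"
      using pd_inv f0 Suc.prems(2) by simp
    ultimately show ?thesis by (rule nsm_cong)
  qed
  moreover have "nsm 0 (\<lambda>y. inverse (f y))" using f0 Suc.prems(2) pd_inv
    by (auto intro: continuous_on_inverse)
  ultimately show ?case by simp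
qed

lemma nsm_sqrt: "nsm n f \<Longrightarrow> \<forall>x\<in>\<Omega>. f x \<noteq> 0 \<Longrightarrow> nsm n (\<lambda>y. sqrt (f y))"
proof (induction n)
  case 0 then show ?case using pd_sqrt by (auto intro: continuous_on_real_sqrt)
next
  case (Suc n)
  have f0: "nsm 0 f" and fi: "\<And>i. nsm n (pd \<Omega> i f)" and fn: "nsm n f"
    using Suc.prems(1) nsm_mono by auto
  have ih: "nsm n (\<lambda>y. sqrt (f y))" using Suc.IH fn Suc.prems(2) by blast
  have iv: "nsm n (\<lambda>y. inverse (f y))" using nsm_inv fn Suc.prems(2) by blast
  have "nsm n (pd \<Omega> i (\<lambda>y. sqrt (f y)))" for i
  proof -
    have "nsm n (\<lambda>y. pd \<Omega> i f y * ((sqrt (f y) * inverse (f y)) * (\<lambda>_. 1/2) y))"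
      by (intro nsm_mult nsm_const fi ih iv)
    moreover have "\<forall>y\<in>\<Omega>. pd \<Omega> i f y * ((sqrt (f y) * inverse (f y)) * (\<lambda>_. 1/2) y)
          = pd \<Omega> i (\<lambda>y. sqrt (f y)) y"
      using pd_sqrt f0 Suc.prems(2) by simp
    ultimately show ?thesis by (rule nsm_cong)
  qed
  moreover have "nsm 0 (\<lambda>y. sqrt (f y))" using f0 Suc.prems(2) pd_sqrt
    by (auto intro: continuous_on_real_sqrt)
  ultimately show ?case by simp
qed

end

context hs begin

lemma smooth_const: "smooth_on \<Omega> (\<lambda>_. c)"
  unfolding smooth_nsm using nsm_const by blast
lemma smooth_add: "smooth_on \<Omega> f \<Longrightarrow> smooth_on \<Omega> g \<Longrightarrow> smooth_on \<Omega> (\<lambda>y. f y + g y)"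
  unfolding smooth_nsm using nsm_add by blast
lemma smooth_mult: "smooth_on \<Omega> f \<Longrightarrow> smooth_on \<Omega> g \<Longrightarrow> smooth_on \<Omega> (\<lambda>y. f y * g y)"
  unfolding smooth_nsm using nsm_mult by blast
lemma smooth_inv: "smooth_on \<Omega> f \<Longrightarrow> \<forall>x\<in>\<Omega>. f x \<noteq> 0 \<Longrightarrow> smooth_on \<Omega> (\<lambda>y. inverse (f y))"
  unfolding smooth_nsm using nsm_inv by blast
lemma smooth_sqrt: "smooth_on \<Omega> f \<Longrightarrow> \<forall>x\<in>\<Omega>. f x \<noteq> 0 \<Longrightarrow> smooth_on \<Omega> (\<lambda>y. sqrt (f y))"
  unfolding smooth_nsm using nsm_sqrt by blast
lemma smooth_cong: "smooth_on \<Omega> f \<Longrightarrow> \<forall>y\<in>\<Omega>. f y = g y \<Longrightarrow> smooth_on \<Omega> g"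
  unfolding smooth_nsm using nsm_cong by blast
lemma smooth_pd: "smooth_on \<Omega> f \<Longrightarrow> smooth_on \<Omega> (pd \<Omega> i f)"
  unfolding smooth_nsm
proof
  fix n assume "\<forall>n. nsm n f"
  then have "nsm (Suc n) f" by blast
  then show "nsm n (pd \<Omega> i f)" by simp
qed
lemma smooth_pds: "smooth_on \<Omega> f \<Longrightarrow> smooth_on \<Omega> (pds \<Omega> is f)"
  by (induction "is") (auto intro: smooth_pd)
lemma smooth_has_pd: "smooth_on \<Omega> f \<Longrightarrow> x \<in> \<Omega> \<Longrightarrow> has_pd \<Omega> i f x"
  unfolding smooth_on_def by (drule spec[of _ "[]"]) simp
lemma smooth_cont: "smooth_on \<Omega> f \<Longrightarrow> continuous_on \<Omega> f"
  unfolding smooth_on_def by (drule spec[of _ "[]"]) simp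

lemma smooth_lin: "smooth_on \<Omega> f \<Longrightarrow> smooth_on \<Omega> g \<Longrightarrow> smooth_on \<Omega> (\<lambda>y. a * f y + b * g y)"
  by (intro smooth_add smooth_mult smooth_const)

lemma pd_lin:
  assumes "x \<in> \<Omega>" "has_pd \<Omega> i f x" "has_pd \<Omega> i g x"
  shows "has_pd \<Omega> i (\<lambda>y. a * f y + b * g y) x \<and>
     pd \<Omega> i (\<lambda>y. a * f y + b * g y) x = a * pd \<Omega> i f x + b * pd \<Omega> i g x"
proof -
  have ca: "has_pd \<Omega> i (\<lambda>_. a) x" "pd \<Omega> i (\<lambda>_. a) x = 0" using pd_const assms(1) by auto
  have cb: "has_pd \<Omega> i (\<lambda>_. b) x" "pd \<Omega> i (\<lambda>_. b) x = 0" using pd_const assms(1) by auto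
  note m1 = pd_mult[OF assms(1) ca(1) assms(2)]
  note m2 = pd_mult[OF assms(1) cb(1) assms(3)]
  show ?thesis using pd_add[OF assms(1) conjunct1[OF m1] conjunct1[OF m2]] m1 m2 ca cb by simp
qed

lemma pds_lin:
  assumes "smooth_on \<Omega> f" "smooth_on \<Omega> g"
  shows "\<forall>x\<in>\<Omega>. pds \<Omega> is (\<lambda>y. a * f y + b * g y) x = a * pds \<Omega> is f x + b * pds \<Omega> is g x"
proof (induction "is")
  case Nil then show ?case by simp
next
  case (Cons i "is")
  show ?case
  proof
    fix x assume x: "x \<in> \<Omega>"
    have "pds \<Omega> (i # is) (\<lambda>y. a * f y + b * g y) x =
          pd \<Omega> i (\<lambda>y. a * pds \<Omega> is f y + b * pds \<Omega> is g y) x"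
      using pd_cong(2)[OF x Cons.IH] by simp
    also have "\<dots> = a * pds \<Omega> (i # is) f x + b * pds \<Omega> (i # is) g x"
      using pd_lin[OF x smooth_has_pd[OF smooth_pds[OF assms(1)] x]
          smooth_has_pd[OF smooth_pds[OF assms(2)] x]] by simp
    finally show "pds \<Omega> (i # is) (\<lambda>y. a * f y + b * g y) x = a * pds \<Omega> (i # is) f x + b * pds \<Omega> (i # is) g x" .
  qed
qed

definition W :: "nat \<Rightarrow> (real^'n \<Rightarrow> real) \<Rightarrow> bool" where
  "W j F \<longleftrightarrow> (\<forall>m\<le>j. \<forall>x\<in>\<Omega>. x $ nn = 0 \<longrightarrow> pds \<Omega> (replicate m nn) F x = 0)"

lemma W_cong: "W j F \<Longrightarrow> \<forall>y\<in>\<Omega>. F y = G y \<Longrightarrow> W j G"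
proof -
  assume a: "W j F" "\<forall>y\<in>\<Omega>. F y = G y"
  have "\<And>m x. x \<in> \<Omega> \<Longrightarrow> pds \<Omega> (replicate m nn) F x = pds \<Omega> (replicate m nn) G x"
    using pds_cong[OF a(2)] by blast
  then show ?thesis using a(1) unfolding W_def by simp
qed

lemma W_lin: "smooth_on \<Omega> A \<Longrightarrow> smooth_on \<Omega> B \<Longrightarrow> W j A \<Longrightarrow> W j B \<Longrightarrow> W j (\<lambda>y. a * A y + b * B y)"
  unfolding W_def using pds_lin by simp

lemma W_mono: "W (Suc j) A \<Longrightarrow> W j A"
  unfolding W_def by auto

lemma rep_suc: "pds \<Omega> (replicate (Suc m) nn) F = pds \<Omega> (replicate m nn) (pd \<Omega> nn F)"
proof -
  have "replicate (Suc m) nn = replicate m nn @ [nn]" by (simp add: replicate_append_same)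
  then show ?thesis by (simp add: pds_append)
qed

lemma W_pdnn: "W (Suc j) A \<Longrightarrow> W j (pd \<Omega> nn A)"
  unfolding W_def by (auto simp flip: rep_suc)

lemma W_Suc: "W (Suc j) A \<longleftrightarrow> (\<forall>x\<in>\<Omega>. x $ nn = 0 \<longrightarrow> A x = 0) \<and> W j (pd \<Omega> nn A)"
proof
  assume a: "W (Suc j) A"
  show "(\<forall>x\<in>\<Omega>. x $ nn = 0 \<longrightarrow> A x = 0) \<and> W j (pd \<Omega> nn A)"
    using a W_pdnn unfolding W_def by (metis le0 pds.simps(1) replicate_0)
next
  assume a: "(\<forall>x\<in>\<Omega>. x $ nn = 0 \<longrightarrow> A x = 0) \<and> W j (pd \<Omega> nn A)"
  show "W (Suc j) A" unfolding W_def
  proof (intro allI impI ballI)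
    fix m x assume m: "m \<le> Suc j" and x: "x \<in> \<Omega>" "x $ nn = 0"
    show "pds \<Omega> (replicate m nn) A x = 0"
    proof (cases m)
      case 0 then show ?thesis using a x by simp
    next
      case (Suc k) then show ?thesis using a x m unfolding W_def by (simp del: replicate.simps add: rep_suc)
    qed
  qed
qed

lemma W_0: "W 0 A \<longleftrightarrow> (\<forall>x\<in>\<Omega>. x $ nn = 0 \<longrightarrow> A x = 0)"
  unfolding W_def by auto

lemma W_ideal: "W j A \<Longrightarrow> smooth_on \<Omega> A \<Longrightarrow> smooth_on \<Omega> B \<Longrightarrow> W j (\<lambda>y. A y * B y)"
proof (induction j arbitrary: A B)
  case 0 then show ?case unfolding W_0 by simp
next
  case (Suc j)
  have "W j (pd \<Omega> nn (\<lambda>y. A y * B y))"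
  proof -
    have a1: "W j (\<lambda>y. pd \<Omega> nn A y * B y)"
      using Suc.IH[OF W_pdnn[OF Suc.prems(1)] smooth_pd[OF Suc.prems(2)] Suc.prems(3)] .
    have a2: "W j (\<lambda>y. A y * pd \<Omega> nn B y)"
      using Suc.IH[OF W_mono[OF Suc.prems(1)] Suc.prems(2) smooth_pd[OF Suc.prems(3)]] .
    have "W j (\<lambda>y. 1 * (pd \<Omega> nn A y * B y) + 1 * (A y * pd \<Omega> nn B y))"
      by (intro W_lin a1 a2 smooth_mult smooth_pd Suc.prems)
    moreover have "\<forall>y\<in>\<Omega>. 1 * (pd \<Omega> nn A y * B y) + 1 * (A y * pd \<Omega> nn B y) = pd \<Omega> nn (\<lambda>y. A y * B y) y"
      using pd_mult smooth_has_pd Suc.prems by simp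
    ultimately show ?thesis by (rule W_cong)
  qed
  then show ?case using Suc.prems(1) unfolding W_Suc by simp
qed

lemma pd_zero_int:
  assumes "\<forall>y\<in>\<Omega>. y $ nn > 0 \<longrightarrow> G y = 0" "y \<in> \<Omega>" "y $ nn > 0"
  shows "pd \<Omega> i G y = 0"
proof -
  have "((\<lambda>t. G (y + t *\<^sub>R axis i 1)) has_real_derivative 0) (at 0 within {t. y + t *\<^sub>R axis i 1 \<in> \<Omega>})"
  proof (rule has_field_derivative_transform_within[OF DERIV_const[of 0] assms(3)])
    show "0 \<in> {t. y + t *\<^sub>R axis i 1 \<in> \<Omega>}" using assms by simp
    fix t :: real assume t: "t \<in> {t. y + t *\<^sub>R axis i 1 \<in> \<Omega>}" "dist t 0 < y $ nn"
    have "(y + t *\<^sub>R axis i 1) $ nn \<ge> y $ nn - \<bar>t\<bar>" by (auto simp: axis_def)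
    then have "(y + t *\<^sub>R axis i 1) $ nn > 0" using t by auto
    then show "0 = G (y + t *\<^sub>R axis i 1)" using assms t by auto
  qed
  then show ?thesis using pd_rule assms by blast
qed

lemma pds_zero_int:
  assumes "\<forall>y\<in>\<Omega>. y $ nn > 0 \<longrightarrow> G y = 0"
  shows "\<forall>y\<in>\<Omega>. y $ nn > 0 \<longrightarrow> pds \<Omega> is G y = 0"
  using assms by (induction "is") (auto intro: pd_zero_int)

lemma zero_bdry:
  fixes g :: "real^'n \<Rightarrow> real"
  assumes "continuous_on \<Omega> g" "\<forall>y\<in>\<Omega>. y $ nn > 0 \<longrightarrow> g y = 0" "x \<in> \<Omega>"
  shows "g x = 0"
proof (rule ccontr)
  assume ne: "g x \<noteq> 0"
  obtain d where d: "d > 0" "\<forall>y\<in>\<Omega>. dist y x < d \<longrightarrow> dist (g y) (g x) < \<bar>g x\<bar>"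
    using assms(1,3) ne unfolding continuous_on_iff by (metis zero_less_abs_iff)
  obtain e where e: "e > 0" "\<forall>y. y $ nn \<ge> 0 \<longrightarrow> dist y x < e \<longrightarrow> y \<in> \<Omega>"
    using nbhd assms(3) by blast
  define t where "t = min d e / 2"
  have t: "t > 0" "t < d" "t < e" using d e by (auto simp: t_def)
  define y where "y = x + t *\<^sub>R axis nn 1"
  have x0: "x $ nn \<ge> 0" using assms(3) sub_hs half_space_def by auto
  have yn: "y $ nn > 0" using x0 t by (simp add: y_def)
  have dy: "dist y x = t" using t by (simp add: y_def dist_norm)
  have yO: "y \<in> \<Omega>" using e yn dy t by auto
  have "g y = 0" using assms(2) yO yn by auto
  then show False using d yO dy t by auto
qed

lemma W_zero_int:
  assumes "smooth_on \<Omega> Z" "\<forall>y\<in>\<Omega>. y $ nn > 0 \<longrightarrow> Z y = 0"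
  shows "W j Z"
  unfolding W_def
  using zero_bdry[OF smooth_cont[OF smooth_pds[OF assms(1)]] pds_zero_int[OF assms(2)]] by blast

end

context hs begin

lemma line_deriv:
  assumes "\<forall>t\<in>S. p + t *\<^sub>R axis i 1 \<in> \<Omega>" "\<forall>t\<in>S. has_pd \<Omega> i F (p + t *\<^sub>R axis i 1)" "t \<in> S"
  shows "((\<lambda>t. F (p + t *\<^sub>R axis i 1)) has_real_derivative pd \<Omega> i F (p + t *\<^sub>R axis i 1)) (at t within S)"
proof -
  define y where "y = p + t *\<^sub>R axis i 1"
  define g where "g = (\<lambda>s::real. s - t)"
  have D0: "((\<lambda>s. F (y + s *\<^sub>R axis i 1)) has_real_derivative pd \<Omega> i F y)
           (at 0 within {s. y + s *\<^sub>R axis i 1 \<in> \<Omega>})"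
    using has_pd_deriv assms y_def by blast
  have yy: "\<And>s. y + (s - t) *\<^sub>R axis i 1 = p + s *\<^sub>R axis i 1"
    by (simp add: y_def algebra_simps)
  have sub: "g ` S \<subseteq> {s. y + s *\<^sub>R axis i 1 \<in> \<Omega>}"
    using assms(1) yy by (auto simp: g_def)
  have D1: "((\<lambda>s. F (y + s *\<^sub>R axis i 1)) has_real_derivative pd \<Omega> i F y) (at (g t) within g ` S)"
    using DERIV_subset[OF D0 sub] by (simp add: g_def)
  have G: "(g has_real_derivative 1) (at t within S)"
    unfolding g_def using DERIV_diff[OF DERIV_ident DERIV_const] by simp
  have "((\<lambda>s. F (y + s *\<^sub>R axis i 1)) \<circ> g has_real_derivative pd \<Omega> i F y * 1) (at t within S)"
    by (rule DERIV_image_chain[OF D1 G])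
  moreover have "(\<lambda>s. F (y + s *\<^sub>R axis i 1)) \<circ> g = (\<lambda>s. F (p + s *\<^sub>R axis i 1))"
    using yy by (auto simp: g_def o_def)
  ultimately show ?thesis by (simp add: y_def)
qed

lemma rect:
  assumes sm: "smooth_on \<Omega> F" and h: "h > 0"
    and R: "\<And>s t. 0 \<le> s \<Longrightarrow> s \<le> h \<Longrightarrow> 0 \<le> t \<Longrightarrow> t \<le> h \<Longrightarrow>
              x + s *\<^sub>R axis i 1 + t *\<^sub>R axis k 1 \<in> \<Omega>"
  shows "\<exists>\<sigma>\<in>{0..h}. \<exists>\<tau>\<in>{0..h}.
     F (x + h *\<^sub>R axis i 1 + h *\<^sub>R axis k 1) - F (x + h *\<^sub>R axis i 1) - F (x + h *\<^sub>R axis k 1) + F x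
       = h * (h * pd \<Omega> k (pd \<Omega> i F) (x + \<sigma> *\<^sub>R axis i 1 + \<tau> *\<^sub>R axis k 1))"
proof -
  let ?a = "axis i (1::real)" and ?b = "axis k (1::real)"
  let ?A = "pd \<Omega> i F"
  have smA: "smooth_on \<Omega> ?A" using sm smooth_pd by blast
  define \<phi> where "\<phi> = (\<lambda>s. F ((x + h *\<^sub>R ?b) + s *\<^sub>R ?a) - F (x + s *\<^sub>R ?a))"
  define D\<phi> where "D\<phi> = (\<lambda>s. ?A ((x + h *\<^sub>R ?b) + s *\<^sub>R ?a) - ?A (x + s *\<^sub>R ?a))"
  have m1: "\<forall>s\<in>{0..h}. (x + h *\<^sub>R ?b) + s *\<^sub>R ?a \<in> \<Omega>"
    using R h by (auto simp: algebra_simps)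
  have m2: "\<forall>s\<in>{0..h}. x + s *\<^sub>R ?a \<in> \<Omega>"
    using R[of _ 0] h by auto
  have "\<exists>\<sigma>\<in>{0<..<h}. \<phi> h - \<phi> 0 = (*) (D\<phi> \<sigma>) (h - 0)"
  proof (rule mvt_simple[OF h])
    fix s assume s: "0 \<le> s" "s \<le> h"
    have "(\<phi> has_real_derivative D\<phi> s) (at s within {0..h})"
      unfolding \<phi>_def D\<phi>_def
      by (intro DERIV_diff line_deriv m1 m2) (use s sm smooth_has_pd m1 m2 in auto)
    then show "(\<phi> has_derivative (*) (D\<phi> s)) (at s within {0..h})"
      by (rule has_field_derivative_imp_has_derivative)
  qed
  then obtain \<sigma> where \<sigma>: "\<sigma> \<in> {0<..<h}" "\<phi> h - \<phi> 0 = D\<phi> \<sigma> * h" by auto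
  define \<psi> where "\<psi> = (\<lambda>t. ?A ((x + \<sigma> *\<^sub>R ?a) + t *\<^sub>R ?b))"
  have m3: "\<forall>t\<in>{0..h}. (x + \<sigma> *\<^sub>R ?a) + t *\<^sub>R ?b \<in> \<Omega>"
    using R \<sigma> by auto
  have "\<exists>\<tau>\<in>{0<..<h}. \<psi> h - \<psi> 0 = (*) (pd \<Omega> k ?A ((x + \<sigma> *\<^sub>R ?a) + \<tau> *\<^sub>R ?b)) (h - 0)"
  proof (rule mvt_simple[OF h])
    fix t assume t: "0 \<le> t" "t \<le> h"
    have "(\<psi> has_real_derivative pd \<Omega> k ?A ((x + \<sigma> *\<^sub>R ?a) + t *\<^sub>R ?b)) (at t within {0..h})"
      unfolding \<psi>_def
      by (intro line_deriv m3) (use t smA smooth_has_pd m3 in auto)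
    then show "(\<psi> has_derivative (*) (pd \<Omega> k ?A ((x + \<sigma> *\<^sub>R ?a) + t *\<^sub>R ?b))) (at t within {0..h})"
      by (rule has_field_derivative_imp_has_derivative)
  qed
  then obtain \<tau> where \<tau>: "\<tau> \<in> {0<..<h}"
    "\<psi> h - \<psi> 0 = pd \<Omega> k ?A ((x + \<sigma> *\<^sub>R ?a) + \<tau> *\<^sub>R ?b) * h" by auto
  have "D\<phi> \<sigma> = \<psi> h - \<psi> 0" unfolding D\<phi>_def \<psi>_def by (simp add: algebra_simps)
  moreover have "\<phi> h - \<phi> 0 = F (x + h *\<^sub>R ?a + h *\<^sub>R ?b) - F (x + h *\<^sub>R ?a) - F (x + h *\<^sub>R ?b) + F x"
    unfolding \<phi>_def by (simp add: algebra_simps)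
  ultimately show ?thesis using \<sigma> \<tau> by (intro bexI[of _ \<sigma>] bexI[of _ \<tau>]) (auto simp: algebra_simps)
qed

lemma commute:
  assumes sm: "smooth_on \<Omega> F" and x: "x \<in> \<Omega>"
  shows "pd \<Omega> k (pd \<Omega> i F) x = pd \<Omega> i (pd \<Omega> k F) x"
proof (rule ccontr)
  let ?a = "axis i (1::real)" and ?b = "axis k (1::real)"
  let ?AB = "pd \<Omega> k (pd \<Omega> i F)" and ?BA = "pd \<Omega> i (pd \<Omega> k F)"
  assume ne: "?AB x \<noteq> ?BA x"
  define e where "e = \<bar>?AB x - ?BA x\<bar> / 2"
  have e0: "e > 0" using ne by (simp add: e_def)
  have cAB: "continuous_on \<Omega> ?AB" and cBA: "continuous_on \<Omega> ?BA"
    using sm by (auto intro!: smooth_cont smooth_pd)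
  obtain d1 where d1: "d1 > 0" "\<forall>y\<in>\<Omega>. dist y x < d1 \<longrightarrow> dist (?AB y) (?AB x) < e"
    using cAB x e0 unfolding continuous_on_iff by blast
  obtain d2 where d2: "d2 > 0" "\<forall>y\<in>\<Omega>. dist y x < d2 \<longrightarrow> dist (?BA y) (?BA x) < e"
    using cBA x e0 unfolding continuous_on_iff by blast
  obtain r where r: "r > 0" "\<forall>y. y $ nn \<ge> 0 \<longrightarrow> dist y x < r \<longrightarrow> y \<in> \<Omega>"
    using nbhd x by blast
  define h where "h = min r (min d1 d2) / 3"
  have h: "h > 0" "2 * h < r" "2 * h < d1" "2 * h < d2" using r d1 d2 by (auto simp: h_def)
  have x0: "x $ nn \<ge> 0" using x sub_hs half_space_def by auto
  have dist_le: "dist (x + s *\<^sub>R axis p 1 + t *\<^sub>R axis q 1) x \<le> 2 * h"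
    if "0 \<le> s" "s \<le> h" "0 \<le> t" "t \<le> h" for s t p q
  proof -
    have "dist (x + s *\<^sub>R axis p 1 + t *\<^sub>R axis q 1) x = norm (s *\<^sub>R axis p (1::real) + t *\<^sub>R axis q 1)"
      by (simp add: dist_norm)
    also have "\<dots> \<le> norm (s *\<^sub>R axis p (1::real)) + norm (t *\<^sub>R axis q (1::real))"
      by (rule norm_triangle_ineq)
    also have "\<dots> \<le> 2 * h" using that by simp
    finally show ?thesis .
  qed
  have inO: "x + s *\<^sub>R axis p 1 + t *\<^sub>R axis q 1 \<in> \<Omega>"
    if "0 \<le> s" "s \<le> h" "0 \<le> t" "t \<le> h" for s t p q
  proof -
    have "(x + s *\<^sub>R axis p 1 + t *\<^sub>R axis q 1) $ nn \<ge> 0"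
      using x0 that by (auto simp: axis_def)
    moreover have "dist (x + s *\<^sub>R axis p 1 + t *\<^sub>R axis q 1) x < r"
      using dist_le[OF that, of p q] h by linarith
    ultimately show ?thesis using r by blast
  qed
  obtain \<sigma>1 \<tau>1 where st1: "\<sigma>1 \<in> {0..h}" "\<tau>1 \<in> {0..h}"
    "F (x + h *\<^sub>R ?a + h *\<^sub>R ?b) - F (x + h *\<^sub>R ?a) - F (x + h *\<^sub>R ?b) + F x
       = h * (h * ?AB (x + \<sigma>1 *\<^sub>R ?a + \<tau>1 *\<^sub>R ?b))"
    using rect[OF sm h(1), of x i k] inO by blast
  obtain \<sigma>2 \<tau>2 where st2: "\<sigma>2 \<in> {0..h}" "\<tau>2 \<in> {0..h}"
    "F (x + h *\<^sub>R ?b + h *\<^sub>R ?a) - F (x + h *\<^sub>R ?b) - F (x + h *\<^sub>R ?a) + F x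
       = h * (h * ?BA (x + \<sigma>2 *\<^sub>R ?b + \<tau>2 *\<^sub>R ?a))"
    using rect[OF sm h(1), of x k i] inO by blast
  have v: "x + h *\<^sub>R ?b + h *\<^sub>R ?a = x + h *\<^sub>R ?a + h *\<^sub>R ?b" by (simp add: algebra_simps)
  have st2': "F (x + h *\<^sub>R ?a + h *\<^sub>R ?b) - F (x + h *\<^sub>R ?b) - F (x + h *\<^sub>R ?a) + F x
       = h * (h * ?BA (x + \<sigma>2 *\<^sub>R ?b + \<tau>2 *\<^sub>R ?a))"
    using st2(3) unfolding v .
  have "h * (h * ?AB (x + \<sigma>1 *\<^sub>R ?a + \<tau>1 *\<^sub>R ?b)) = h * (h * ?BA (x + \<sigma>2 *\<^sub>R ?b + \<tau>2 *\<^sub>R ?a))"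
    using st1(3) st2' by linarith
  then have eq: "?AB (x + \<sigma>1 *\<^sub>R ?a + \<tau>1 *\<^sub>R ?b) = ?BA (x + \<sigma>2 *\<^sub>R ?b + \<tau>2 *\<^sub>R ?a)"
    using h(1) by simp
  have p1: "x + \<sigma>1 *\<^sub>R ?a + \<tau>1 *\<^sub>R ?b \<in> \<Omega>" "dist (x + \<sigma>1 *\<^sub>R ?a + \<tau>1 *\<^sub>R ?b) x < d1"
    using inO dist_le st1 h by (auto, smt (verit, best) atLeastAtMost_iff)
  have p2: "x + \<sigma>2 *\<^sub>R ?b + \<tau>2 *\<^sub>R ?a \<in> \<Omega>" "dist (x + \<sigma>2 *\<^sub>R ?b + \<tau>2 *\<^sub>R ?a) x < d2"
    using inO dist_le st2 h by (auto, smt (verit, best) atLeastAtMost_iff)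
  have "dist (?AB (x + \<sigma>1 *\<^sub>R ?a + \<tau>1 *\<^sub>R ?b)) (?AB x) < e" using d1 p1 by blast
  moreover have "dist (?BA (x + \<sigma>2 *\<^sub>R ?b + \<tau>2 *\<^sub>R ?a)) (?BA x) < e" using d2 p2 by blast
  ultimately show False using eq e_def by (simp add: dist_real_def, smt (verit))
qed

lemma tan_zero:
  assumes "\<forall>y\<in>\<Omega>. y $ nn = 0 \<longrightarrow> A y = 0" "x \<in> \<Omega>" "x $ nn = 0" "k \<noteq> nn"
  shows "pd \<Omega> k A x = 0"
proof -
  have "((\<lambda>t. A (x + t *\<^sub>R axis k 1)) has_real_derivative 0) (at 0 within {t. x + t *\<^sub>R axis k 1 \<in> \<Omega>})"
  proof (rule has_field_derivative_transform_within[OF DERIV_const[of 0], of 1])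
    show "0 \<in> {t. x + t *\<^sub>R axis k 1 \<in> \<Omega>}" using assms by simp
    fix t :: real assume t: "t \<in> {t. x + t *\<^sub>R axis k 1 \<in> \<Omega>}"
    have "(x + t *\<^sub>R axis k 1) $ nn = 0" using assms by (auto simp: axis_def)
    then show "0 = A (x + t *\<^sub>R axis k 1)" using assms t by auto
  qed simp
  then show ?thesis using pd_rule assms by blast
qed

lemma W_tan: "W j A \<Longrightarrow> smooth_on \<Omega> A \<Longrightarrow> k \<noteq> nn \<Longrightarrow> W j (pd \<Omega> k A)"
proof (induction j arbitrary: A)
  case 0 then show ?case unfolding W_0 using tan_zero by blast
next
  case (Suc j)
  have b: "\<forall>x\<in>\<Omega>. x $ nn = 0 \<longrightarrow> pd \<Omega> k A x = 0"
    using Suc.prems tan_zero unfolding W_Suc by blast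
  have "W j (pd \<Omega> k (pd \<Omega> nn A))"
    using Suc.IH[of "pd \<Omega> nn A"] Suc.prems smooth_pd unfolding W_Suc by blast
  moreover have "\<forall>y\<in>\<Omega>. pd \<Omega> k (pd \<Omega> nn A) y = pd \<Omega> nn (pd \<Omega> k A) y"
    using commute Suc.prems(2) by blast
  ultimately have "W j (pd \<Omega> nn (pd \<Omega> k A))" by (rule W_cong)
  then show ?case using b unfolding W_Suc by blast
qed

end

context hs begin

lemma pds_zero: "\<forall>x\<in>\<Omega>. pds \<Omega> is (\<lambda>_. 0) x = 0"
proof (induction "is")
  case Nil then show ?case by simp
next
  case (Cons i "is")
  show ?case
  proof
    fix x assume x: "x \<in> \<Omega>"
    have "pds \<Omega> (i # is) (\<lambda>_. 0) x = pd \<Omega> i (\<lambda>_. 0) x"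
      using pd_cong(2)[OF x Cons.IH] by simp
    then show "pds \<Omega> (i # is) (\<lambda>_. 0) x = 0" using pd_const x by simp
  qed
qed

lemma pd_diff:
  assumes "x \<in> \<Omega>" "has_pd \<Omega> i f x" "has_pd \<Omega> i g x"
  shows "pd \<Omega> i (\<lambda>y. f y - g y) x = pd \<Omega> i f x - pd \<Omega> i g x"
  using pd_lin[OF assms, of 1 "-1"] by simp

definition R :: "nat \<Rightarrow> (real^'n \<Rightarrow> real) \<Rightarrow> (real^'n \<Rightarrow> real) \<Rightarrow> bool" where
  "R j F G \<longleftrightarrow> smooth_on \<Omega> F \<and> smooth_on \<Omega> G \<and> W j (\<lambda>y. F y - G y)"

definition VC :: "(real^'n \<Rightarrow> real) \<Rightarrow> (real^'n \<Rightarrow> real) \<Rightarrow> bool" where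
  "VC F G \<longleftrightarrow> (\<forall>j. R j F G)"

lemma R_refl: "smooth_on \<Omega> F \<Longrightarrow> R j F F"
  unfolding R_def W_def using pds_zero by simp

lemma R_smooth: "R j F G \<Longrightarrow> smooth_on \<Omega> F" "R j F G \<Longrightarrow> smooth_on \<Omega> G"
  unfolding R_def by auto

lemma smooth_diff: "smooth_on \<Omega> F \<Longrightarrow> smooth_on \<Omega> G \<Longrightarrow> smooth_on \<Omega> (\<lambda>y. F y - G y)"
  using smooth_lin[of F G 1 "-1"] by simp

lemma R_cong: "R j F G \<Longrightarrow> \<forall>y\<in>\<Omega>. F y = F' y \<Longrightarrow> \<forall>y\<in>\<Omega>. G y = G' y \<Longrightarrow> R j F' G'"
  unfolding R_def using smooth_cong W_cong by (smt (verit, ccfv_threshold))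

lemma R_mono: "R (Suc j) F G \<Longrightarrow> R j F G"
  unfolding R_def using W_mono by blast

lemma R_lin: "R j F1 F2 \<Longrightarrow> R j G1 G2 \<Longrightarrow> R j (\<lambda>y. a * F1 y + b * G1 y) (\<lambda>y. a * F2 y + b * G2 y)"
proof -
  assume f: "R j F1 F2" and g: "R j G1 G2"
  have "W j (\<lambda>y. a * (F1 y - F2 y) + b * (G1 y - G2 y))"
    using f g unfolding R_def by (intro W_lin smooth_diff) auto
  moreover have "(\<lambda>y. a * (F1 y - F2 y) + b * (G1 y - G2 y)) =
     (\<lambda>y. (a * F1 y + b * G1 y) - (a * F2 y + b * G2 y))" by (simp add: algebra_simps)
  ultimately show ?thesis using f g unfolding R_def by (auto intro: smooth_lin)
qed

lemma R_const: "R j (\<lambda>_. c) (\<lambda>_. c)"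
  by (rule R_refl[OF smooth_const])

lemma R_add: "R j F1 F2 \<Longrightarrow> R j G1 G2 \<Longrightarrow> R j (\<lambda>y. F1 y + G1 y) (\<lambda>y. F2 y + G2 y)"
  using R_lin[of j F1 F2 G1 G2 1 1] by simp

lemma R_diff: "R j F1 F2 \<Longrightarrow> R j G1 G2 \<Longrightarrow> R j (\<lambda>y. F1 y - G1 y) (\<lambda>y. F2 y - G2 y)"
  using R_lin[of j F1 F2 G1 G2 1 "-1"] by simp

lemma R_neg: "R j F1 F2 \<Longrightarrow> R j (\<lambda>y. - F1 y) (\<lambda>y. - F2 y)"
  using R_lin[of j F1 F2 F1 F2 "-1" 0] by simp

lemma R_mult: "R j F1 F2 \<Longrightarrow> R j G1 G2 \<Longrightarrow> R j (\<lambda>y. F1 y * G1 y) (\<lambda>y. F2 y * G2 y)"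
proof -
  assume f: "R j F1 F2" and g: "R j G1 G2"
  have s: "smooth_on \<Omega> F1" "smooth_on \<Omega> F2" "smooth_on \<Omega> G1" "smooth_on \<Omega> G2"
    "W j (\<lambda>y. F1 y - F2 y)" "W j (\<lambda>y. G1 y - G2 y)" using f g unfolding R_def by auto
  have "W j (\<lambda>y. 1 * ((F1 y - F2 y) * G1 y) + 1 * ((G1 y - G2 y) * F2 y))"
    by (intro W_lin W_ideal smooth_mult smooth_diff s)
  moreover have "(\<lambda>y. 1 * ((F1 y - F2 y) * G1 y) + 1 * ((G1 y - G2 y) * F2 y)) =
     (\<lambda>y. F1 y * G1 y - F2 y * G2 y)" by (simp add: algebra_simps)
  ultimately show ?thesis using s unfolding R_def by (auto intro: smooth_mult)
qed

lemma R_inv: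
  assumes "R j F1 F2" "\<forall>y\<in>\<Omega>. F1 y \<noteq> 0" "\<forall>y\<in>\<Omega>. F2 y \<noteq> 0"
  shows "R j (\<lambda>y. inverse (F1 y)) (\<lambda>y. inverse (F2 y))"
proof -
  have s: "smooth_on \<Omega> F1" "smooth_on \<Omega> F2" "W j (\<lambda>y. F1 y - F2 y)"
    using assms unfolding R_def by auto
  have i1: "smooth_on \<Omega> (\<lambda>y. inverse (F1 y))" using smooth_inv s assms by blast
  have i2: "smooth_on \<Omega> (\<lambda>y. inverse (F2 y))" using smooth_inv s assms by blast
  have "W j (\<lambda>y. (-1) * (F1 y - F2 y) + 0 * (F1 y - F2 y))"
    by (intro W_lin smooth_diff s)
  then have w: "W j (\<lambda>y. F2 y - F1 y)" by simp
  have "W j (\<lambda>y. (F2 y - F1 y) * (inverse (F1 y) * inverse (F2 y)))"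
    by (intro W_ideal w smooth_diff smooth_mult s i1 i2)
  moreover have "\<forall>y\<in>\<Omega>. (F2 y - F1 y) * (inverse (F1 y) * inverse (F2 y)) = inverse (F1 y) - inverse (F2 y)"
    using assms by (auto simp: field_simps)
  ultimately have "W j (\<lambda>y. inverse (F1 y) - inverse (F2 y))" by (rule W_cong)
  then show ?thesis using i1 i2 unfolding R_def by auto
qed

lemma R_pd_tan:
  assumes "R j F G" "k \<noteq> nn"
  shows "R j (pd \<Omega> k F) (pd \<Omega> k G)"
proof -
  have s: "smooth_on \<Omega> F" "smooth_on \<Omega> G" "W j (\<lambda>y. F y - G y)"
    using assms unfolding R_def by auto
  have "W j (pd \<Omega> k (\<lambda>y. F y - G y))"
    using W_tan[of j "\<lambda>y. F y - G y" k] s assms(2) smooth_diff by blast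
  moreover have "\<forall>y\<in>\<Omega>. pd \<Omega> k (\<lambda>y. F y - G y) y = pd \<Omega> k F y - pd \<Omega> k G y"
    using pd_diff smooth_has_pd s by simp
  ultimately have "W j (\<lambda>y. pd \<Omega> k F y - pd \<Omega> k G y)" by (rule W_cong)
  then show ?thesis using s smooth_pd unfolding R_def by auto
qed

lemma R_pd_nn:
  assumes "R (Suc j) F G"
  shows "R j (pd \<Omega> nn F) (pd \<Omega> nn G)"
proof -
  have s: "smooth_on \<Omega> F" "smooth_on \<Omega> G" "W (Suc j) (\<lambda>y. F y - G y)"
    using assms unfolding R_def by auto
  have "W j (pd \<Omega> nn (\<lambda>y. F y - G y))"
    using W_pdnn[of j "\<lambda>y. F y - G y"] s by simp
  moreover have "\<forall>y\<in>\<Omega>. pd \<Omega> nn (\<lambda>y. F y - G y) y = pd \<Omega> nn F y - pd \<Omega> nn G y"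
    using pd_diff smooth_has_pd s by simp
  ultimately have "W j (\<lambda>y. pd \<Omega> nn F y - pd \<Omega> nn G y)" by (rule W_cong)
  then show ?thesis using s smooth_pd unfolding R_def by auto
qed

lemma R_sqrt:
  assumes "R j F1 F2" "\<forall>y\<in>\<Omega>. F1 y \<noteq> 0" "\<forall>y\<in>\<Omega>. F2 y \<noteq> 0"
  shows "R j (\<lambda>y. sqrt (F1 y)) (\<lambda>y. sqrt (F2 y))"
  using assms(1)
proof (induction j)
  have s1: "smooth_on \<Omega> (\<lambda>y. sqrt (F1 y))" "smooth_on \<Omega> (\<lambda>y. sqrt (F2 y))"
    using assms R_smooth smooth_sqrt by blast+
  {
    case 0
    then show ?case using s1 unfolding R_def W_0 by auto
  next
    case (Suc j)
    have r: "R j F1 F2" using Suc.prems R_mono by blast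
    have b: "\<forall>x\<in>\<Omega>. x $ nn = 0 \<longrightarrow> sqrt (F1 x) - sqrt (F2 x) = 0"
      using Suc.prems unfolding R_def W_Suc by simp
    have "R j (\<lambda>y. pd \<Omega> nn F1 y * ((sqrt (F1 y) * inverse (F1 y)) * (\<lambda>_. 1/2) y))
              (\<lambda>y. pd \<Omega> nn F2 y * ((sqrt (F2 y) * inverse (F2 y)) * (\<lambda>_. 1/2) y))"
      by (intro R_mult R_pd_nn Suc.prems Suc.IH r R_const R_inv assms(2,3))
    then have "R j (pd \<Omega> nn (\<lambda>y. sqrt (F1 y))) (pd \<Omega> nn (\<lambda>y. sqrt (F2 y)))"
      by (rule R_cong) (use pd_sqrt smooth_has_pd R_smooth[OF r] assms(2,3) in auto)
    then have "W j (\<lambda>y. pd \<Omega> nn (\<lambda>y. sqrt (F1 y)) y - pd \<Omega> nn (\<lambda>y. sqrt (F2 y)) y)"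
      unfolding R_def by simp
    moreover have "\<forall>y\<in>\<Omega>. pd \<Omega> nn (\<lambda>y. sqrt (F1 y)) y - pd \<Omega> nn (\<lambda>y. sqrt (F2 y)) y =
        pd \<Omega> nn (\<lambda>y. sqrt (F1 y) - sqrt (F2 y)) y"
      using pd_diff smooth_has_pd s1 by simp
    ultimately have "W j (pd \<Omega> nn (\<lambda>y. sqrt (F1 y) - sqrt (F2 y)))" by (rule W_cong)
    then show ?case using s1 b unfolding R_def W_Suc by simp
  }
qed

lemma R_sum:
  assumes "finite A" "\<forall>l\<in>A. R j (F1 l) (F2 l)"
  shows "R j (\<lambda>y. \<Sum>l\<in>A. F1 l y) (\<lambda>y. \<Sum>l\<in>A. F2 l y)"
  using assms
proof (induction A rule: finite_induct)
  case empty then show ?case using R_const[of j 0] by simp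
next
  case (insert a A)
  have "R j (\<lambda>y. F1 a y + (\<Sum>l\<in>A. F1 l y)) (\<lambda>y. F2 a y + (\<Sum>l\<in>A. F2 l y))"
    using insert by (intro R_add) auto
  then show ?case using insert by simp
qed

lemma R_prod:
  assumes "finite A" "\<forall>l\<in>A. R j (F1 l) (F2 l)"
  shows "R j (\<lambda>y. \<Prod>l\<in>A. F1 l y) (\<lambda>y. \<Prod>l\<in>A. F2 l y)"
  using assms
proof (induction A rule: finite_induct)
  case empty then show ?case using R_const[of j 1] by simp
next
  case (insert a A)
  have "R j (\<lambda>y. F1 a y * (\<Prod>l\<in>A. F1 l y)) (\<lambda>y. F2 a y * (\<Prod>l\<in>A. F2 l y))"
    using insert by (intro R_mult) auto
  then show ?case using insert by simp
qed

lemma R_VC: "VC F G \<Longrightarrow> R j F G" unfolding VC_def by blast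

lemma VC_refl: "smooth_on \<Omega> F \<Longrightarrow> VC F F" unfolding VC_def using R_refl by blast
lemma VC_smooth: "VC F G \<Longrightarrow> smooth_on \<Omega> F" "VC F G \<Longrightarrow> smooth_on \<Omega> G"
  unfolding VC_def R_def by auto
lemma VC_cong: "VC F G \<Longrightarrow> \<forall>y\<in>\<Omega>. F y = F' y \<Longrightarrow> \<forall>y\<in>\<Omega>. G y = G' y \<Longrightarrow> VC F' G'"
  unfolding VC_def using R_cong by blast
lemma VC_const: "VC (\<lambda>_. c) (\<lambda>_. c)" unfolding VC_def using R_const by blast
lemma VC_add: "VC F1 F2 \<Longrightarrow> VC G1 G2 \<Longrightarrow> VC (\<lambda>y. F1 y + G1 y) (\<lambda>y. F2 y + G2 y)"
  unfolding VC_def using R_add by blast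
lemma VC_diff: "VC F1 F2 \<Longrightarrow> VC G1 G2 \<Longrightarrow> VC (\<lambda>y. F1 y - G1 y) (\<lambda>y. F2 y - G2 y)"
  unfolding VC_def using R_diff by blast
lemma VC_neg: "VC F1 F2 \<Longrightarrow> VC (\<lambda>y. - F1 y) (\<lambda>y. - F2 y)"
  unfolding VC_def using R_neg by blast
lemma VC_mult: "VC F1 F2 \<Longrightarrow> VC G1 G2 \<Longrightarrow> VC (\<lambda>y. F1 y * G1 y) (\<lambda>y. F2 y * G2 y)"
  unfolding VC_def using R_mult by blast
lemma VC_inv: "VC F1 F2 \<Longrightarrow> \<forall>y\<in>\<Omega>. F1 y \<noteq> 0 \<Longrightarrow> \<forall>y\<in>\<Omega>. F2 y \<noteq> 0 \<Longrightarrow>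
    VC (\<lambda>y. inverse (F1 y)) (\<lambda>y. inverse (F2 y))"
  unfolding VC_def using R_inv by blast
lemma VC_sqrt: "VC F1 F2 \<Longrightarrow> \<forall>y\<in>\<Omega>. F1 y \<noteq> 0 \<Longrightarrow> \<forall>y\<in>\<Omega>. F2 y \<noteq> 0 \<Longrightarrow>
    VC (\<lambda>y. sqrt (F1 y)) (\<lambda>y. sqrt (F2 y))"
  unfolding VC_def using R_sqrt by blast
lemma VC_pd: "VC F G \<Longrightarrow> VC (pd \<Omega> i F) (pd \<Omega> i G)"
  unfolding VC_def by (cases "i = nn") (auto intro: R_pd_nn R_pd_tan)
lemma VC_sum: "finite A \<Longrightarrow> \<forall>l\<in>A. VC (F1 l) (F2 l) \<Longrightarrow>
    VC (\<lambda>y. \<Sum>l\<in>A. F1 l y) (\<lambda>y. \<Sum>l\<in>A. F2 l y)"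
  unfolding VC_def using R_sum by blast
lemma VC_prod: "finite A \<Longrightarrow> \<forall>l\<in>A. VC (F1 l) (F2 l) \<Longrightarrow>
    VC (\<lambda>y. \<Prod>l\<in>A. F1 l y) (\<lambda>y. \<Prod>l\<in>A. F2 l y)"
  unfolding VC_def using R_prod by blast

lemma VC_det:
  fixes M1 M2 :: "real^'n \<Rightarrow> real^'n^'n"
  assumes "\<forall>r c. VC (\<lambda>y. M1 y $ r $ c) (\<lambda>y. M2 y $ r $ c)"
  shows "VC (\<lambda>y. det (M1 y)) (\<lambda>y. det (M2 y))"
proof -
  have "VC (\<lambda>y. \<Sum>p\<in>{p. p permutes (UNIV::'n set)}. (\<lambda>y. of_int (sign p)) y * (\<Prod>i\<in>UNIV. M1 y $ i $ p i))
           (\<lambda>y. \<Sum>p\<in>{p. p permutes (UNIV::'n set)}. (\<lambda>y. of_int (sign p)) y * (\<Prod>i\<in>UNIV. M2 y $ i $ p i))"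
    by (intro VC_sum VC_mult VC_prod VC_const ballI assms[rule_format]) (auto intro: finite_permutations)
  then show ?thesis unfolding det_def by simp
qed

end

lemma posdef_det_nz:
  fixes A :: "real^'n^'n"
  assumes "\<forall>v. v \<noteq> 0 \<longrightarrow> v \<bullet> (A *v v) > 0"
  shows "det A \<noteq> 0"
proof -
  have "inj ((*v) A)"
  proof (rule injI)
    fix v w assume e: "A *v v = A *v w"
    have "A *v (v - w) = 0" using e by (simp add: matrix_vector_mult_diff_distrib)
    then show "v = w" using assms[rule_format, of "v - w"] by auto
  qed
  then show ?thesis using det_nz_iff_inj[of "(*v) A"] by simp
qed

lemma minv_props:
  fixes A :: "real^'n^'n"
  assumes "det A \<noteq> 0"
  shows "A ** matrix_inv A = mat 1" "matrix_inv A ** A = mat 1"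
proof -
  have "invertible A" using assms invertible_det_nz by blast
  then have "A ** matrix_inv A = mat 1 \<and> matrix_inv A ** A = mat 1"
    unfolding invertible_def matrix_inv_def by (rule someI_ex)
  then show "A ** matrix_inv A = mat 1" "matrix_inv A ** A = mat 1" by auto
qed

definition cram :: "real^'n^'n \<Rightarrow> 'n \<Rightarrow> 'n \<Rightarrow> real^'n^'n" where
  "cram A a b = (\<chi> r c. if c = a then (if r = b then 1 else 0) else A $ r $ c)"

lemma minv_cramer:
  fixes A :: "real^'n^'n"
  assumes d: "det A \<noteq> 0"
  shows "matrix_inv A $ a $ b = det (cram A a b) * inverse (det A)"
proof -
  define x where "x = matrix_inv A *v axis b 1"
  have "A *v x = axis b 1"
    unfolding x_def matrix_vector_mul_assoc minv_props(1)[OF d] by simp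
  then have "x = (\<chi> k. det (\<chi> i j. if j = k then axis b 1 $ i else A $ i $ j) / det A)"
    using cramer[OF d] by blast
  moreover have "(\<chi> i j. if j = a then axis b 1 $ i else A $ i $ j) = cram A a b"
    unfolding cram_def by (simp add: axis_def vec_eq_iff)
  ultimately have "x $ a = det (cram A a b) / det A"
    by simp
  moreover have "x $ a = matrix_inv A $ a $ b"
    unfolding x_def matrix_vector_mult_basis column_def by simp
  ultimately show ?thesis by (simp add: divide_inverse)
qed

lemma minv_normal:
  fixes A :: "real^'n^'n"
  assumes d: "det A \<noteq> 0" and n: "A $ nn $ nn = 1" "\<forall>k. k \<noteq> nn \<longrightarrow> A $ nn $ k = 0 \<and> A $ k $ nn = 0"
  shows "matrix_inv A $ a $ nn = (if a = nn then 1 else 0)"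
        "matrix_inv A $ nn $ a = (if a = nn then 1 else 0)"
proof -
  have c: "A *v axis nn 1 = axis nn 1"
    unfolding matrix_vector_mult_basis column_def using n by (auto simp: axis_def vec_eq_iff)
  have "matrix_inv A *v axis nn 1 = axis nn 1"
    by (metis c matrix_vector_mul_assoc minv_props(2)[OF d] matrix_vector_mul_lid)
  then have "(matrix_inv A *v axis nn 1) $ a = axis nn 1 $ a" by simp
  then show "matrix_inv A $ a $ nn = (if a = nn then 1 else 0)"
    unfolding matrix_vector_mult_basis column_def by (simp add: axis_def)
  have rw: "\<And>M::real^'n^'n. axis nn 1 v* M = (\<chi> c. M $ nn $ c)"
  proof -
    fix M :: "real^'n^'n"
    have "axis nn 1 v* M = transpose M *v axis nn 1" by simp
    also have "\<dots> = (\<chi> c. M $ nn $ c)"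
      unfolding matrix_vector_mult_basis column_def transpose_def by simp
    finally show "axis nn 1 v* M = (\<chi> c. M $ nn $ c)" .
  qed
  have r: "axis nn 1 v* A = axis nn 1"
    unfolding rw using n by (auto simp: axis_def vec_eq_iff)
  have "axis nn 1 v* matrix_inv A = axis nn 1"
    by (metis r vector_matrix_mul_assoc minv_props(1)[OF d] vector_matrix_mul_rid)
  then have "(axis nn 1 v* matrix_inv A) $ a = axis nn 1 $ a" by simp
  then show "matrix_inv A $ nn $ a = (if a = nn then 1 else 0)"
    unfolding rw by (simp add: axis_def)
qed

context hs begin

lemma VC_div: "VC F1 F2 \<Longrightarrow> VC G1 G2 \<Longrightarrow> \<forall>y\<in>\<Omega>. G1 y \<noteq> 0 \<Longrightarrow> \<forall>y\<in>\<Omega>. G2 y \<noteq> 0 \<Longrightarrow>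
    VC (\<lambda>y. F1 y / G1 y) (\<lambda>y. F2 y / G2 y)"
  using VC_mult[OF _ VC_inv] by (simp add: divide_inverse)

context
  fixes H1 H2 :: "real^'n \<Rightarrow> real^'n^'n"
  assumes E: "\<forall>a b. VC (\<lambda>y. H1 y $ a $ b) (\<lambda>y. H2 y $ a $ b)"
    and d1: "\<forall>y\<in>\<Omega>. det (H1 y) \<noteq> 0" and d2: "\<forall>y\<in>\<Omega>. det (H2 y) \<noteq> 0"
begin

lemma VC_E: "VC (\<lambda>y. H1 y $ a $ b) (\<lambda>y. H2 y $ a $ b)"
  using E by blast

lemma VC_dt: "VC (\<lambda>y. det (H1 y)) (\<lambda>y. det (H2 y))"
  by (rule VC_det[OF E])

lemma VC_sd: "VC (\<lambda>y. sqrt (det (H1 y))) (\<lambda>y. sqrt (det (H2 y)))"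
  by (rule VC_sqrt[OF VC_dt d1 d2])

lemma sd_nz: "\<forall>y\<in>\<Omega>. sqrt (det (H1 y)) \<noteq> 0" "\<forall>y\<in>\<Omega>. sqrt (det (H2 y)) \<noteq> 0"
  using d1 d2 by auto

lemma VC_minv: "VC (\<lambda>y. matrix_inv (H1 y) $ a $ b) (\<lambda>y. matrix_inv (H2 y) $ a $ b)"
proof -
  have "\<forall>r c. VC (\<lambda>y. cram (H1 y) a b $ r $ c) (\<lambda>y. cram (H2 y) a b $ r $ c)"
  proof (intro allI)
    fix r c
    show "VC (\<lambda>y. cram (H1 y) a b $ r $ c) (\<lambda>y. cram (H2 y) a b $ r $ c)"
      by (cases "c = a") (simp_all add: cram_def VC_const VC_E)
  qed
  then have "VC (\<lambda>y. det (cram (H1 y) a b) * inverse (det (H1 y)))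
                (\<lambda>y. det (cram (H2 y) a b) * inverse (det (H2 y)))"
    by (intro VC_mult VC_det VC_inv VC_dt d1 d2)
  then show ?thesis by (rule VC_cong) (auto intro!: minv_cramer[symmetric] simp: d1 d2)
qed

lemma VC_chr: "VC (christoffel \<Omega> H1 k i j) (christoffel \<Omega> H2 k i j)"
proof -
  have "VC (\<lambda>x. 1/2 * (\<Sum>l\<in>UNIV. matrix_inv (H1 x) $ k $ l *
        (pd \<Omega> i (\<lambda>y. H1 y $ j $ l) x + pd \<Omega> j (\<lambda>y. H1 y $ i $ l) x
         - pd \<Omega> l (\<lambda>y. H1 y $ i $ j) x)))
       (\<lambda>x. 1/2 * (\<Sum>l\<in>UNIV. matrix_inv (H2 x) $ k $ l *
        (pd \<Omega> i (\<lambda>y. H2 y $ j $ l) x + pd \<Omega> j (\<lambda>y. H2 y $ i $ l) x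
         - pd \<Omega> l (\<lambda>y. H2 y $ i $ j) x)))"
    by (intro VC_mult VC_const VC_sum VC_add VC_diff VC_pd VC_E VC_minv ballI) simp_all
  then show ?thesis by (rule VC_cong) (auto simp: christoffel_def)
qed

lemma VC_ricci: "VC (ricci \<Omega> H1 i j) (ricci \<Omega> H2 i j)"
proof -
  have "VC (\<lambda>x. \<Sum>k\<in>UNIV. pd \<Omega> k (christoffel \<Omega> H1 k i j) x - pd \<Omega> j (christoffel \<Omega> H1 k i k) x
        + (\<Sum>l\<in>UNIV. christoffel \<Omega> H1 k k l x * christoffel \<Omega> H1 l i j x
                    - christoffel \<Omega> H1 k j l x * christoffel \<Omega> H1 l i k x))
    (\<lambda>x. \<Sum>k\<in>UNIV. pd \<Omega> k (christoffel \<Omega> H2 k i j) x - pd \<Omega> j (christoffel \<Omega> H2 k i k) x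
        + (\<Sum>l\<in>UNIV. christoffel \<Omega> H2 k k l x * christoffel \<Omega> H2 l i j x
                    - christoffel \<Omega> H2 k j l x * christoffel \<Omega> H2 l i k x))"
    by (intro VC_mult VC_sum VC_add VC_diff VC_pd VC_chr ballI) simp_all
  then show ?thesis by (rule VC_cong) (auto simp: ricci_def)
qed

lemma VC_scal: "VC (scalar_curvature \<Omega> H1) (scalar_curvature \<Omega> H2)"
proof -
  have "VC (\<lambda>x. \<Sum>i\<in>UNIV. \<Sum>j\<in>UNIV. matrix_inv (H1 x) $ i $ j * ricci \<Omega> H1 i j x)
           (\<lambda>x. \<Sum>i\<in>UNIV. \<Sum>j\<in>UNIV. matrix_inv (H2 x) $ i $ j * ricci \<Omega> H2 i j x)"
    by (intro VC_mult VC_sum VC_minv VC_ricci ballI) simp_all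
  then show ?thesis by (rule VC_cong) (auto simp: scalar_curvature_def)
qed

lemma VC_phi: "VC f g \<Longrightarrow> VC (\<lambda>y. sqrt (det (H1 y)) * (\<Sum>j\<in>UNIV. matrix_inv (H1 y) $ i $ j * pd \<Omega> j f y))
    (\<lambda>y. sqrt (det (H2 y)) * (\<Sum>j\<in>UNIV. matrix_inv (H2 y) $ i $ j * pd \<Omega> j g y))"
  by (intro VC_mult VC_sum VC_minv VC_sd VC_pd ballI) simp_all

lemma VC_lb: "VC f g \<Longrightarrow> VC (laplace_beltrami \<Omega> H1 f) (laplace_beltrami \<Omega> H2 g)"
proof -
  assume fg: "VC f g"
  have "VC (\<lambda>x. (1 / sqrt (det (H1 x))) *
     (\<Sum>i\<in>UNIV. pd \<Omega> i (\<lambda>y. sqrt (det (H1 y)) *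
          (\<Sum>j\<in>UNIV. matrix_inv (H1 y) $ i $ j * pd \<Omega> j f y)) x))
     (\<lambda>x. (1 / sqrt (det (H2 x))) *
     (\<Sum>i\<in>UNIV. pd \<Omega> i (\<lambda>y. sqrt (det (H2 y)) *
          (\<Sum>j\<in>UNIV. matrix_inv (H2 y) $ i $ j * pd \<Omega> j g y)) x))"
    by (intro VC_mult VC_div VC_const VC_sd sd_nz VC_sum VC_pd VC_phi fg ballI) simp_all
  then show ?thesis by (rule VC_cong) (auto simp: laplace_beltrami_def)
qed

lemma VC_cl: "VC f g \<Longrightarrow> VC (conformal_laplacian \<Omega> H1 f) (conformal_laplacian \<Omega> H2 g)"
proof -
  assume fg: "VC f g"
  have "VC (\<lambda>x. - laplace_beltrami \<Omega> H1 f x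
     + (real CARD('n) - 2) / (4 * (real CARD('n) - 1)) * scalar_curvature \<Omega> H1 x * f x)
     (\<lambda>x. - laplace_beltrami \<Omega> H2 g x
     + (real CARD('n) - 2) / (4 * (real CARD('n) - 1)) * scalar_curvature \<Omega> H2 x * g x)"
    by (intro VC_add VC_neg VC_mult VC_const VC_lb VC_scal fg)
  then show ?thesis by (rule VC_cong) (auto simp: conformal_laplacian_def)
qed

end

end

context hs begin

definition Phi :: "(real^'n \<Rightarrow> real^'n^'n) \<Rightarrow> (real^'n \<Rightarrow> real) \<Rightarrow> real^'n \<Rightarrow> real" where
  "Phi H f x = - conformal_laplacian \<Omega> H f x
     + (real CARD('n) - 2) / (4 * (real CARD('n) - 1)) * scalar_curvature \<Omega> H x * f x
     - pd \<Omega> nn (\<lambda>y. sqrt (det (H y))) x * inverse (sqrt (det (H x))) * pd \<Omega> nn f x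
     - inverse (sqrt (det (H x))) *
       (\<Sum>k\<in>UNIV-{nn}. pd \<Omega> k (\<lambda>y. sqrt (det (H y)) *
          (\<Sum>j\<in>UNIV. matrix_inv (H y) $ k $ j * pd \<Omega> j f y)) x)"

lemma expansion:
  fixes H :: "real^'n \<Rightarrow> real^'n^'n"
  assumes sm: "\<forall>a b. smooth_on \<Omega> (\<lambda>y. H y $ a $ b)" and d: "\<forall>y\<in>\<Omega>. det (H y) \<noteq> 0"
    and nf: "normal_form_metric nn \<Omega> H" and f: "smooth_on \<Omega> f" and x: "x \<in> \<Omega>"
  shows "pd \<Omega> nn (pd \<Omega> nn f) x = Phi H f x"
proof -
  let ?s = "\<lambda>y. sqrt (det (H y))"
  let ?\<phi> = "\<lambda>k y. sqrt (det (H y)) * (\<Sum>j\<in>UNIV. matrix_inv (H y) $ k $ j * pd \<Omega> j f y)"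
  have E: "\<forall>a b. VC (\<lambda>y. H y $ a $ b) (\<lambda>y. H y $ a $ b)" using sm VC_refl by blast
  have smS: "smooth_on \<Omega> ?s" using VC_smooth(1)[OF VC_sd[OF E d d]] .
  have sx: "?s x \<noteq> 0" using d x by simp
  have phi_nn: "\<forall>y\<in>\<Omega>. ?\<phi> nn y = ?s y * pd \<Omega> nn f y"
  proof
    fix y assume y: "y \<in> \<Omega>"
    have "(\<Sum>j\<in>UNIV. matrix_inv (H y) $ nn $ j * pd \<Omega> j f y) = (\<Sum>j\<in>UNIV. if j = nn then pd \<Omega> j f y else 0)"
      by (rule sum.cong) (use minv_normal(2)[of "H y" nn] d y nf in \<open>auto simp: normal_form_metric_def\<close>)
    then show "?\<phi> nn y = ?s y * pd \<Omega> nn f y" by simp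
  qed
  have pnn: "pd \<Omega> nn (?\<phi> nn) x = pd \<Omega> nn ?s x * pd \<Omega> nn f x + ?s x * pd \<Omega> nn (pd \<Omega> nn f) x"
    using pd_cong(2)[OF x phi_nn] pd_mult[OF x smooth_has_pd[OF smS x] smooth_has_pd[OF smooth_pd[OF f] x]]
    by simp
  have LB: "laplace_beltrami \<Omega> H f x = 1 / ?s x * (pd \<Omega> nn (?\<phi> nn) x + (\<Sum>k\<in>UNIV-{nn}. pd \<Omega> k (?\<phi> k) x))"
    unfolding laplace_beltrami_def by (simp add: sum.remove[of UNIV nn])
  have key: "\<And>(s::real) P ds df S C. s \<noteq> 0 \<Longrightarrow>
     P = - (- (1 / s * (ds * df + s * P + S)) + C) + C - ds * inverse s * df - inverse s * S"
    by (simp add: field_simps)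
  show ?thesis
    unfolding Phi_def conformal_laplacian_def LB pnn by (rule key[OF sx])
qed

context
  fixes H1 H2 :: "real^'n \<Rightarrow> real^'n^'n"
  assumes E: "\<forall>a b. VC (\<lambda>y. H1 y $ a $ b) (\<lambda>y. H2 y $ a $ b)"
    and d1: "\<forall>y\<in>\<Omega>. det (H1 y) \<noteq> 0" and d2: "\<forall>y\<in>\<Omega>. det (H2 y) \<noteq> 0"
begin

lemma R_pdf: "R (Suc j) f1 f2 \<Longrightarrow> R j (pd \<Omega> l f1) (pd \<Omega> l f2)"
  by (cases "l = nn") (auto intro: R_pd_nn R_pd_tan R_mono)

lemma R_Phi:
  assumes f: "R (Suc j) f1 f2" and L: "R j (conformal_laplacian \<Omega> H1 f1) (conformal_laplacian \<Omega> H2 f2)"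
  shows "R j (Phi H1 f1) (Phi H2 f2)"
proof -
  note V = VC_sd[OF E d1 d2] VC_scal[OF E d1 d2] VC_minv[OF E d1 d2]
  have s1: "\<forall>y\<in>\<Omega>. sqrt (det (H1 y)) \<noteq> 0" "\<forall>y\<in>\<Omega>. sqrt (det (H2 y)) \<noteq> 0" using d1 d2 by auto
  have phi: "R j (\<lambda>y. sqrt (det (H1 y)) * (\<Sum>l\<in>UNIV. matrix_inv (H1 y) $ k $ l * pd \<Omega> l f1 y))
                  (\<lambda>y. sqrt (det (H2 y)) * (\<Sum>l\<in>UNIV. matrix_inv (H2 y) $ k $ l * pd \<Omega> l f2 y))" for k
    by (intro R_mult R_VC V R_sum ballI R_pdf[OF f]) simp
  have sum: "R j (\<lambda>x. \<Sum>k\<in>UNIV-{nn}. pd \<Omega> k (\<lambda>y. sqrt (det (H1 y)) *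
          (\<Sum>l\<in>UNIV. matrix_inv (H1 y) $ k $ l * pd \<Omega> l f1 y)) x)
     (\<lambda>x. \<Sum>k\<in>UNIV-{nn}. pd \<Omega> k (\<lambda>y. sqrt (det (H2 y)) *
          (\<Sum>l\<in>UNIV. matrix_inv (H2 y) $ k $ l * pd \<Omega> l f2 y)) x)"
    by (rule R_sum) (auto intro: R_pd_tan phi)
  have "R j (\<lambda>x. - conformal_laplacian \<Omega> H1 f1 x
     + (\<lambda>_. (real CARD('n) - 2) / (4 * (real CARD('n) - 1))) x * scalar_curvature \<Omega> H1 x * f1 x
     - pd \<Omega> nn (\<lambda>y. sqrt (det (H1 y))) x * inverse (sqrt (det (H1 x))) * pd \<Omega> nn f1 x
     - inverse (sqrt (det (H1 x))) *
       (\<Sum>k\<in>UNIV-{nn}. pd \<Omega> k (\<lambda>y. sqrt (det (H1 y)) *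
          (\<Sum>j\<in>UNIV. matrix_inv (H1 y) $ k $ j * pd \<Omega> j f1 y)) x))
    (\<lambda>x. - conformal_laplacian \<Omega> H2 f2 x
     + (\<lambda>_. (real CARD('n) - 2) / (4 * (real CARD('n) - 1))) x * scalar_curvature \<Omega> H2 x * f2 x
     - pd \<Omega> nn (\<lambda>y. sqrt (det (H2 y))) x * inverse (sqrt (det (H2 x))) * pd \<Omega> nn f2 x
     - inverse (sqrt (det (H2 x))) *
       (\<Sum>k\<in>UNIV-{nn}. pd \<Omega> k (\<lambda>y. sqrt (det (H2 y)) *
          (\<Sum>j\<in>UNIV. matrix_inv (H2 y) $ k $ j * pd \<Omega> j f2 y)) x))"
    by (intro R_diff R_add R_neg R_mult L R_const R_VC V VC_pd VC_inv s1 R_mono[OF f] R_pdf[OF f] sum)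
  then show ?thesis unfolding Phi_def by simp
qed

end
end

theorem lemma3p4:
  fixes nn :: "'n::finite"
    and \<Omega> :: "(real^'n) set"
    and H1 H2 :: "real^'n \<Rightarrow> real^'n^'n"
    and f1 f2 :: "real^'n \<Rightarrow> real"
  assumes "openin (top_of_set (half_space nn)) \<Omega>"
    and "\<Omega> \<inter> {x. x $ nn = 0} \<noteq> {}"
    and "riem_metric \<Omega> H1" and "riem_metric \<Omega> H2"
    and "normal_form_metric nn \<Omega> H1" and "normal_form_metric nn \<Omega> H2"
    and "\<forall>j a b. \<forall>x\<in>\<Omega> \<inter> {x. x $ nn = 0}.
           pds \<Omega> (replicate j nn) (\<lambda>y. H1 y $ a $ b - H2 y $ a $ b) x = 0"
    and "smooth_on \<Omega> f1" and "smooth_on \<Omega> f2"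
    and "\<forall>x\<in>\<Omega> \<inter> {x. x $ nn > 0}. conformal_laplacian \<Omega> H1 f1 x = 0"
    and "\<forall>x\<in>\<Omega> \<inter> {x. x $ nn > 0}. conformal_laplacian \<Omega> H2 f2 x = 0"
    and "\<forall>x\<in>\<Omega> \<inter> {x. x $ nn = 0}. f1 x = f2 x"
    and "\<forall>x\<in>\<Omega> \<inter> {x. x $ nn = 0}. pd \<Omega> nn f1 x = pd \<Omega> nn f2 x"
  shows "\<forall>j. \<forall>x\<in>\<Omega> \<inter> {x. x $ nn = 0}.
           pds \<Omega> (replicate j nn) (\<lambda>y. f1 y - f2 y) x = 0"
proof -
  interpret hs nn \<Omega> by unfold_locales (rule assms(1))
  have d1: "\<forall>y\<in>\<Omega>. det (H1 y) \<noteq> 0" using assms(3) posdef_det_nz unfolding riem_metric_def by blast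
  have d2: "\<forall>y\<in>\<Omega>. det (H2 y) \<noteq> 0" using assms(4) posdef_det_nz unfolding riem_metric_def by blast
  have sm1: "\<forall>a b. smooth_on \<Omega> (\<lambda>y. H1 y $ a $ b)" using assms(3) unfolding riem_metric_def by blast
  have sm2: "\<forall>a b. smooth_on \<Omega> (\<lambda>y. H2 y $ a $ b)" using assms(4) unfolding riem_metric_def by blast
  have E: "\<forall>a b. VC (\<lambda>y. H1 y $ a $ b) (\<lambda>y. H2 y $ a $ b)"
    using sm1 sm2 assms(7) unfolding VC_def R_def W_def by auto
  have E1: "\<forall>a b. VC (\<lambda>y. H1 y $ a $ b) (\<lambda>y. H1 y $ a $ b)" using sm1 VC_refl by blast
  have E2: "\<forall>a b. VC (\<lambda>y. H2 y $ a $ b) (\<lambda>y. H2 y $ a $ b)" using sm2 VC_refl by blast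
  have sL1: "smooth_on \<Omega> (conformal_laplacian \<Omega> H1 f1)"
    using VC_smooth(1)[OF VC_cl[OF E1 d1 d1 VC_refl[OF assms(8)]]] .
  have sL2: "smooth_on \<Omega> (conformal_laplacian \<Omega> H2 f2)"
    using VC_smooth(1)[OF VC_cl[OF E2 d2 d2 VC_refl[OF assms(9)]]] .
  have RL: "R j (conformal_laplacian \<Omega> H1 f1) (conformal_laplacian \<Omega> H2 f2)" for j
    unfolding R_def using sL1 sL2 assms(10,11)
    by (auto intro!: W_zero_int smooth_diff)
  let ?u = "\<lambda>y. f1 y - f2 y"
  have su: "smooth_on \<Omega> ?u" using assms(8,9) smooth_diff by blast
  have pdu: "\<forall>y\<in>\<Omega>. pd \<Omega> nn ?u y = pd \<Omega> nn f1 y - pd \<Omega> nn f2 y"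
    using pd_diff smooth_has_pd assms(8,9) by blast
  have main: "R (Suc j) f1 f2" for j
  proof (induction j)
    case 0
    have "W 0 (pd \<Omega> nn ?u)" unfolding W_0 using pdu assms(13) by auto
    then show ?case unfolding R_def W_Suc using assms(8,9,12) by auto
  next
    case (Suc j)
    have Wj: "W (Suc j) ?u" using Suc unfolding R_def by blast
    have "R j (Phi H1 f1) (Phi H2 f2)" by (rule R_Phi[OF E d1 d2 Suc RL])
    then have wp: "W j (\<lambda>y. Phi H1 f1 y - Phi H2 f2 y)" unfolding R_def by blast
    have "\<forall>y\<in>\<Omega>. Phi H1 f1 y - Phi H2 f2 y = pd \<Omega> nn (pd \<Omega> nn ?u) y"
    proof
      fix y assume y: "y \<in> \<Omega>"
      have "pd \<Omega> nn (pd \<Omega> nn ?u) y = pd \<Omega> nn (\<lambda>y. pd \<Omega> nn f1 y - pd \<Omega> nn f2 y) y"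
        using pd_cong(2)[OF y pdu] .
      also have "\<dots> = pd \<Omega> nn (pd \<Omega> nn f1) y - pd \<Omega> nn (pd \<Omega> nn f2) y"
        using pd_diff y smooth_has_pd smooth_pd assms(8,9) by blast
      also have "\<dots> = Phi H1 f1 y - Phi H2 f2 y"
        using expansion[OF sm1 d1 assms(5) assms(8) y] expansion[OF sm2 d2 assms(6) assms(9) y] by simp
      finally show "Phi H1 f1 y - Phi H2 f2 y = pd \<Omega> nn (pd \<Omega> nn ?u) y" by simp
    qed
    with wp have w2: "W j (pd \<Omega> nn (pd \<Omega> nn ?u))" by (rule W_cong)
    have "W (Suc j) (pd \<Omega> nn ?u)"
      unfolding W_Suc using Wj w2 unfolding W_Suc W_def by auto
    then have "W (Suc (Suc j)) ?u" using Wj unfolding W_Suc by blast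
    then show ?case using assms(8,9) unfolding R_def by blast
  qed
  show ?thesis
  proof (intro allI ballI)
    fix j x assume x: "x \<in> \<Omega> \<inter> {x. x $ nn = 0}"
    have "W (Suc j) ?u" using main unfolding R_def by blast
    then show "pds \<Omega> (replicate j nn) ?u x = 0" using x unfolding W_def by auto
  qed
qed

end
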